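(* Let $\psi\in C^3(\mathbb{R})$ be a known link, $\beta_c\in\mathbb{R}^p$ with $\mathbb{E}[Y_i(0)\mid X_i=x]=\psi(x^\top\beta_c)$, $\hat\beta_c\in\mathbb{R}^p$ any estimate, and $\gamma\in\mathbb{R}^{n_c}$ weights with $\gamma_i\ge0$, $\sum_{i:W_i=0}\gamma_i=1$. Suppose there are $u_n>0$, $M_2,M_3>0$ with $\sup_{|z|\le u_n}|\psi''(z)|\le M_2\log p$, $\sup_{|z|\le u_n}|\psi'''(z)|\le M_3\sqrt{n/\log p}$, and $\max_{i\le n}|X_i^\top\beta_c|\le u_n$, $\max_{i\le n}|X_i^\top\hat\beta_c|\le u_n$. Writing $\delta=\hat\beta_c-\beta_c$, there is an absolute constant $C>0$ such that \begin{align*} |\hat\mu_c-\mu_c|&\le \Big\|\tfrac{1}{n_t}X_t^\top\psi'(X_t\hat\beta_c)-X_c^\top W_c(\hat\beta_c)\gamma\Big\|_\infty\|\delta\|_1\\ &\quad+\Big\|\tfrac{1}{n_t}(X_t^\top\otimes X_t^\top)\operatorname{vec}(W_t'(\hat\beta_c))-[V_1,\dots,V_{n_c}]\gamma\Big\|_\infty\|\delta\|_1^2+|\gamma^\top\varepsilon_c|\\ &\quad+C\Big(M_2\log p\,(\|X_t\|_\infty^2+\|X_c\|_\infty^2)\|\delta\|_1^2+M_3\sqrt{\tfrac{n}{\log p}}\,(\|X_t\|_\infty^3+\|X_c\|_\infty^3)\|\delta\|_1^3\Big). \end{align*}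
   Context: Setting: $n$ units with covariates $X_i\in\mathbb{R}^p$, treatment $W_i\in\{0,1\}$, potential outcomes $Y_i(0),Y_i(1)$, observed $Y_i^{\rm obs}=Y_i(W_i)$; $n_t,n_c$ numbers of treated/control units; $X_t\in\mathbb{R}^{n_t\times p}$, $X_c\in\mathbb{R}^{n_c\times p}$ treated/control covariate matrices, with $X_{c,i}$ the $i$-th control row. Functions of vectors ($\psi'(v)$ etc.) act componentwise. $W_c(\beta)=\operatorname{diag}(\psi'(X_c\beta))$, $W_t'(\beta)=\operatorname{diag}(\psi''(X_t\beta))$, and $V_i=\psi''(X_{c,i}^\top\hat\beta_c)\,X_{c,i}\otimes X_{c,i}\in\mathbb{R}^{p^2}$, so $[V_1,\dots,V_{n_c}]\in\mathbb{R}^{p^2\times n_c}$. $\mu_c=\frac1{n_t}\sum_{i:W_i=1}\psi(X_i^\top\beta_c)$, $\hat\mu_c=\frac1{n_t}\sum_{i:W_i=1}\psi(X_i^\top\hat\beta_c)+\sum_{i:W_i=0}\gamma_i(Y_i^{\rm obs}-\psi(X_i^\top\hat\beta_c))$, $\varepsilon_c=(Y_i(0)-\psi(X_i^\top\beta_c))_{i:W_i=0}$. For matrices $\|A\|_\infty=\max_{i,j}|A_{ij}|$; $\operatorname{vec}$ stacks columns; $\otimes$ is the Kronecker product. *)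

theory Defs
  imports "HOL-Analysis.Analysis"
begin

text \<open>Units are indexed by 0..<n, covariates by 0..<p. X i j is the j-th covariate
of unit i, W i the treatment indicator, Y0 i / Y1 i the potential outcomes.
Vectors in R^p are functions nat => real (only indices < p matter).\<close>

definition lin :: "nat \<Rightarrow> (nat \<Rightarrow> real) \<Rightarrow> (nat \<Rightarrow> real) \<Rightarrow> real" where
  "lin p x b = (\<Sum>j<p. x j * b j)"

definition treated :: "nat \<Rightarrow> (nat \<Rightarrow> bool) \<Rightarrow> nat set" where
  "treated n W = {i. i < n \<and> W i}"

definition control :: "nat \<Rightarrow> (nat \<Rightarrow> bool) \<Rightarrow> nat set" where
  "control n W = {i. i < n \<and> \<not> W i}"

definition Yobs :: "(nat \<Rightarrow> bool) \<Rightarrow> (nat \<Rightarrow> real) \<Rightarrow> (nat \<Rightarrow> real) \<Rightarrow> nat \<Rightarrow> real" where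
  "Yobs W Y0 Y1 i = (if W i then Y1 i else Y0 i)"

definition l1norm :: "nat \<Rightarrow> (nat \<Rightarrow> real) \<Rightarrow> real" where
  "l1norm p v = (\<Sum>j<p. \<bar>v j\<bar>)"

definition vsup :: "nat \<Rightarrow> (nat \<Rightarrow> real) \<Rightarrow> real" where
  "vsup p v = Max (insert 0 {\<bar>v j\<bar> | j. j < p})"

text \<open>max-abs-entry norm of a vector in R^(p^2), indexed by pairs (j,k)\<close>
definition vsup2 :: "nat \<Rightarrow> (nat \<Rightarrow> nat \<Rightarrow> real) \<Rightarrow> real" where
  "vsup2 p v = Max (insert 0 {\<bar>v j k\<bar> | j k. j < p \<and> k < p})"

definition msup :: "nat set \<Rightarrow> nat \<Rightarrow> (nat \<Rightarrow> nat \<Rightarrow> real) \<Rightarrow> real" where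
  "msup S p X = Max (insert 0 {\<bar>X i j\<bar> | i j. i \<in> S \<and> j < p})"

definition mu_c where
  "mu_c n p W X (\<psi>::real\<Rightarrow>real) \<beta> =
     (1 / real (card (treated n W))) * (\<Sum>i\<in>treated n W. \<psi> (lin p (X i) \<beta>))"

definition muhat_c where
  "muhat_c n p W X Y0 Y1 (\<psi>::real\<Rightarrow>real) \<beta>h (\<gamma>::nat\<Rightarrow>real) =
     (1 / real (card (treated n W))) * (\<Sum>i\<in>treated n W. \<psi> (lin p (X i) \<beta>h))
     + (\<Sum>i\<in>control n W. \<gamma> i * (Yobs W Y0 Y1 i - \<psi> (lin p (X i) \<beta>h)))"

definition gamma_eps where
  "gamma_eps n p W X Y0 (\<psi>::real\<Rightarrow>real) \<beta> (\<gamma>::nat\<Rightarrow>real) =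
     (\<Sum>i\<in>control n W. \<gamma> i * (Y0 i - \<psi> (lin p (X i) \<beta>)))"

text \<open>j-th entry of (1/n_t) X_t^T psi'(X_t betahat) - X_c^T W_c(betahat) gamma\<close>
definition grad_imb where
  "grad_imb n p W X (\<psi>1::real\<Rightarrow>real) \<beta>h (\<gamma>::nat\<Rightarrow>real) j =
     (1 / real (card (treated n W))) * (\<Sum>i\<in>treated n W. X i j * \<psi>1 (lin p (X i) \<beta>h))
     - (\<Sum>i\<in>control n W. X i j * \<psi>1 (lin p (X i) \<beta>h) * \<gamma> i)"

text \<open>(j,k)-entry of (1/n_t)(X_t^T \<otimes> X_t^T) vec(W_t'(betahat)) - [V_1..V_nc] gamma;
  note (X_t^T \<otimes> X_t^T) vec(D) = vec(X_t^T D X_t) and V_i = psi''(.) X_ci \<otimes> X_ci.\<close>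
definition hess_imb where
  "hess_imb n p W X (\<psi>2::real\<Rightarrow>real) \<beta>h (\<gamma>::nat\<Rightarrow>real) j k =
     (1 / real (card (treated n W))) * (\<Sum>i\<in>treated n W. X i j * \<psi>2 (lin p (X i) \<beta>h) * X i k)
     - (\<Sum>i\<in>control n W. \<psi>2 (lin p (X i) \<beta>h) * X i j * X i k * \<gamma> i)"

end

theory Submission
  imports Defs
begin

lemma taylor3:
  fixes \<psi> \<psi>1 \<psi>2 \<psi>3 :: "real \<Rightarrow> real"
  assumes d1: "\<forall>z. (\<psi> has_real_derivative \<psi>1 z) (at z)"
    and d2: "\<forall>z. (\<psi>1 has_real_derivative \<psi>2 z) (at z)"
    and d3: "\<forall>z. (\<psi>2 has_real_derivative \<psi>3 z) (at z)"
  shows "\<exists>t. min a b \<le> t \<and> t \<le> max a b \<and>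
     \<psi> b = \<psi> a + \<psi>1 a * (b - a) + \<psi>2 a / 2 * (b - a)^2 + \<psi>3 t / 6 * (b - a)^3"
proof (cases "a = b")
  case True thus ?thesis by (intro exI[of _ a]) auto
next
  case False
  define diff where "diff = (\<lambda>m::nat. if m = 0 then \<psi> else if m = 1 then \<psi>1 else if m = 2 then \<psi>2 else \<psi>3)"
  have D: "\<forall>(m::nat) t. m < 3 \<and> min a b \<le> t \<and> t \<le> max a b \<longrightarrow> DERIV (diff m) t :> diff (Suc m) t"
  proof (intro allI impI)
    fix m :: nat and t assume "m < 3 \<and> min a b \<le> t \<and> t \<le> max a b"
    hence "m = 0 \<or> m = 1 \<or> m = 2" by auto
    thus "DERIV (diff m) t :> diff (Suc m) t" using d1 d2 d3 by (auto simp: diff_def)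
  qed
  from Taylor[of 3 diff \<psi> "min a b" "max a b" a b, OF _ _ D] False
  obtain t where t: "(if b < a then b < t \<and> t < a else a < t \<and> t < b)"
    "\<psi> b = (\<Sum>m<3. (diff m a / fact m) * (b - a)^m) + (diff 3 t / fact 3) * (b - a)^3"
    by (auto simp: diff_def)
  have S: "(\<Sum>m<3. (diff m a / fact m) * (b - a)^m) = \<psi> a + \<psi>1 a * (b - a) + \<psi>2 a / 2 * (b - a)^2"
    by (simp add: diff_def numeral_3_eq_3 fact_numeral power2_eq_square)
  have e3: "diff 3 t / fact 3 = \<psi>3 t / 6" by (simp add: diff_def fact_numeral)
  have E: "\<psi> b = \<psi> a + \<psi>1 a * (b - a) + \<psi>2 a / 2 * (b - a)^2 + \<psi>3 t / 6 * (b - a)^3"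
    using t(2) unfolding S e3 .
  have "min a b \<le> t \<and> t \<le> max a b" using t(1) by (auto split: if_splits)
  with E show ?thesis by blast
qed

lemma vsup_ge: "j < p \<Longrightarrow> \<bar>v j\<bar> \<le> vsup p v"
  unfolding vsup_def
  by (rule Max_ge) (auto intro: finite_subset[of _ "(\<lambda>j. \<bar>v j\<bar>) ` {..<p}"])

lemma vsup_nn: "0 \<le> vsup p v"
  unfolding vsup_def
  by (rule Max_ge) (auto intro: finite_subset[of _ "(\<lambda>j. \<bar>v j\<bar>) ` {..<p}"])

lemma fin2: fixes v :: "nat \<Rightarrow> nat \<Rightarrow> real" and p :: nat shows "finite {\<bar>v j k\<bar> | j k. j < p \<and> k < p}"
  by (rule finite_subset[of _ "(\<lambda>(j,k). \<bar>v j k\<bar>) ` ({..<p} \<times> {..<p})"]) (auto intro!: finite_imageI finite_cartesian_product simp: finite_lessThan)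

lemma vsup2_ge: "j < p \<Longrightarrow> k < p \<Longrightarrow> \<bar>v j k\<bar> \<le> vsup2 p v"
  unfolding vsup2_def using fin2[of v p] by (intro Max_ge) auto

lemma vsup2_nn: "0 \<le> vsup2 p v"
  unfolding vsup2_def using fin2[of v p] by (intro Max_ge) auto

lemma finm: fixes X :: "nat \<Rightarrow> nat \<Rightarrow> real" and p :: nat and S :: "nat set" shows "finite S \<Longrightarrow> finite {\<bar>X i j\<bar> | i j. i \<in> S \<and> j < p}"
  by (rule finite_subset[of _ "(\<lambda>(i,j). \<bar>X i j\<bar>) ` (S \<times> {..<p})"]) (auto intro!: finite_imageI finite_cartesian_product simp: finite_lessThan)

lemma msup_ge: "finite S \<Longrightarrow> i \<in> S \<Longrightarrow> j < p \<Longrightarrow> \<bar>X i j\<bar> \<le> msup S p X"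
  unfolding msup_def using finm[of S X p] by (intro Max_ge) auto

lemma msup_nn: "finite S \<Longrightarrow> 0 \<le> msup S p X"
  unfolding msup_def using finm[of S X p] by (intro Max_ge) auto

lemma l1_nn: "0 \<le> l1norm p d" unfolding l1norm_def by (auto intro: sum_nonneg)

lemma lin_diff: "lin p x a - lin p x b = (\<Sum>j<p. x j * (a j - b j))"
  by (simp add: lin_def sum_subtractf[symmetric] algebra_simps)

lemma absd: "finite S \<Longrightarrow> i \<in> S \<Longrightarrow> \<bar>\<Sum>j<p. X i j * d j\<bar> \<le> msup S p X * l1norm p d"
proof -
  assume S: "finite S" "i \<in> S"
  have "\<bar>\<Sum>j<p. X i j * d j\<bar> \<le> (\<Sum>j<p. \<bar>X i j\<bar> * \<bar>d j\<bar>)"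
    by (rule order_trans[OF sum_abs]) (simp add: abs_mult)
  also have "\<dots> \<le> (\<Sum>j<p. msup S p X * \<bar>d j\<bar>)"
    by (rule sum_mono, rule mult_right_mono) (use S msup_ge in auto)
  finally show ?thesis by (simp add: l1norm_def sum_distrib_left)
qed

lemma lin_bound: "\<bar>\<Sum>j<p. d j * g j\<bar> \<le> vsup p g * l1norm p d"
proof -
  have "\<bar>\<Sum>j<p. d j * g j\<bar> \<le> (\<Sum>j<p. \<bar>d j\<bar> * vsup p g)"
    by (rule order_trans[OF sum_abs], rule sum_mono) (auto simp: abs_mult intro: mult_left_mono vsup_ge)
  also have "(\<Sum>j<p. \<bar>d j\<bar> * vsup p g) = l1norm p d * vsup p g"
    by (simp add: l1norm_def sum_distrib_right)
  finally show ?thesis by (simp add: mult.commute)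
qed

lemma quad_bound: "\<bar>\<Sum>j<p. \<Sum>k<p. d j * d k * h j k\<bar> \<le> vsup2 p h * (l1norm p d)^2"
proof -
  have "\<bar>\<Sum>j<p. \<Sum>k<p. d j * d k * h j k\<bar> \<le> (\<Sum>j<p. \<Sum>k<p. \<bar>d j\<bar> * \<bar>d k\<bar> * vsup2 p h)"
    apply (rule order_trans[OF sum_abs], rule sum_mono)
    apply (rule order_trans[OF sum_abs], rule sum_mono)
    by (auto simp: abs_mult intro: mult_left_mono vsup2_ge)
  thus ?thesis by (simp add: l1norm_def power2_eq_square sum_distrib_right sum_distrib_left mult_ac)
qed

lemma swap3: "(\<Sum>j\<in>A. \<Sum>k\<in>B. \<Sum>i\<in>I. (F i j k :: real)) = (\<Sum>i\<in>I. \<Sum>j\<in>A. \<Sum>k\<in>B. F i j k)"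
proof -
  have "(\<Sum>j\<in>A. \<Sum>k\<in>B. \<Sum>i\<in>I. F i j k) = (\<Sum>j\<in>A. \<Sum>i\<in>I. \<Sum>k\<in>B. F i j k)"
    by (rule sum.cong[OF refl], rule sum.swap)
  also have "\<dots> = (\<Sum>i\<in>I. \<Sum>j\<in>A. \<Sum>k\<in>B. F i j k)" by (rule sum.swap)
  finally show ?thesis .
qed

lemma lc:
  fixes \<delta> A B :: "nat \<Rightarrow> real" and c :: real
  shows "(\<Sum>j\<in>J. \<delta> j * (c * A j - B j)) = c * (\<Sum>j\<in>J. \<delta> j * A j) - (\<Sum>j\<in>J. \<delta> j * B j)"
proof -
  have e: "\<And>j. \<delta> j * (c * A j - B j) = c * (\<delta> j * A j) - \<delta> j * B j" by (simp add: algebra_simps)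
  show ?thesis unfolding e by (simp add: sum_subtractf sum_distrib_left)
qed

lemma lc2:
  fixes \<delta> :: "nat \<Rightarrow> real" and A B :: "nat \<Rightarrow> nat \<Rightarrow> real" and c :: real
  shows "(\<Sum>j\<in>J. \<Sum>k\<in>K. \<delta> j * \<delta> k * (c * A j k - B j k))
    = c * (\<Sum>j\<in>J. \<Sum>k\<in>K. \<delta> j * \<delta> k * A j k) - (\<Sum>j\<in>J. \<Sum>k\<in>K. \<delta> j * \<delta> k * B j k)"
proof -
  have e: "\<And>j k. \<delta> j * \<delta> k * (c * A j k - B j k) = c * (\<delta> j * \<delta> k * A j k) - \<delta> j * \<delta> k * B j k"
    by (simp add: algebra_simps)
  show ?thesis unfolding e by (simp add: sum_subtractf sum_distrib_left)
qed

lemma glin: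
  fixes \<delta> h :: "nat \<Rightarrow> real" and x :: "nat \<Rightarrow> nat \<Rightarrow> real"
  shows "(\<Sum>j<p. \<delta> j * (\<Sum>i\<in>I. x i j * h i)) = (\<Sum>i\<in>I. h i * (\<Sum>j<p. x i j * \<delta> j))"
proof -
  have "(\<Sum>j<p. \<delta> j * (\<Sum>i\<in>I. x i j * h i)) = (\<Sum>j<p. \<Sum>i\<in>I. \<delta> j * (x i j * h i))"
    by (simp only: sum_distrib_left)
  also have "\<dots> = (\<Sum>i\<in>I. \<Sum>j<p. \<delta> j * (x i j * h i))" by (rule sum.swap)
  also have "\<dots> = (\<Sum>i\<in>I. \<Sum>j<p. h i * (x i j * \<delta> j))"
    by (rule sum.cong[OF refl], rule sum.cong[OF refl]) (simp add: mult_ac)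
  also have "\<dots> = (\<Sum>i\<in>I. h i * (\<Sum>j<p. x i j * \<delta> j))"
    by (simp only: sum_distrib_left)
  finally show ?thesis .
qed

lemma glin2:
  fixes \<delta> h :: "nat \<Rightarrow> real" and x :: "nat \<Rightarrow> nat \<Rightarrow> real"
  shows "(\<Sum>j<p. \<Sum>k<p. \<delta> j * \<delta> k * (\<Sum>i\<in>I. x i j * x i k * h i)) = (\<Sum>i\<in>I. h i * (\<Sum>j<p. x i j * \<delta> j)^2)"
proof -
  have sq: "\<And>i. (\<Sum>j<p. x i j * \<delta> j)^2 = (\<Sum>j<p. \<Sum>k<p. x i j * \<delta> j * (x i k * \<delta> k))"
    by (simp only: power2_eq_square sum_product)
  have "(\<Sum>j<p. \<Sum>k<p. \<delta> j * \<delta> k * (\<Sum>i\<in>I. x i j * x i k * h i))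
      = (\<Sum>j<p. \<Sum>k<p. \<Sum>i\<in>I. \<delta> j * \<delta> k * (x i j * x i k * h i))"
    by (simp only: sum_distrib_left)
  also have "\<dots> = (\<Sum>i\<in>I. \<Sum>j<p. \<Sum>k<p. \<delta> j * \<delta> k * (x i j * x i k * h i))" by (rule swap3)
  also have "\<dots> = (\<Sum>i\<in>I. \<Sum>j<p. \<Sum>k<p. h i * (x i j * \<delta> j * (x i k * \<delta> k)))"
    by (rule sum.cong[OF refl], rule sum.cong[OF refl], rule sum.cong[OF refl]) (simp add: mult_ac)
  also have "\<dots> = (\<Sum>i\<in>I. h i * (\<Sum>j<p. \<Sum>k<p. x i j * \<delta> j * (x i k * \<delta> k)))"
    by (simp only: sum_distrib_left)
  also have "\<dots> = (\<Sum>i\<in>I. h i * (\<Sum>j<p. x i j * \<delta> j)^2)"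
    by (simp only: sq)
  finally show ?thesis .
qed

lemma main:
  fixes \<psi> \<psi>1 \<psi>2 \<psi>3 :: "real \<Rightarrow> real" and X :: "nat \<Rightarrow> nat \<Rightarrow> real"
  assumes d1: "\<forall>z. (\<psi> has_real_derivative \<psi>1 z) (at z)"
    and d2: "\<forall>z. (\<psi>1 has_real_derivative \<psi>2 z) (at z)"
    and d3: "\<forall>z. (\<psi>2 has_real_derivative \<psi>3 z) (at z)"
    and g0: "\<forall>i\<in>control n W. \<gamma> i \<ge> 0" and gs: "(\<Sum>i\<in>control n W. \<gamma> i) = 1"
    and M2: "M2 > 0" and M3: "M3 > 0"
    and h3: "\<forall>z. \<bar>z\<bar> \<le> u \<longrightarrow> \<bar>\<psi>3 z\<bar> \<le> M3 * sqrt (real n / ln (real p))"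
    and hc: "\<forall>i<n. \<bar>lin p (X i) \<beta>c\<bar> \<le> u"
    and hh: "\<forall>i<n. \<bar>lin p (X i) \<beta>h\<bar> \<le> u"
  shows "\<bar>muhat_c n p W X Y0 Y1 \<psi> \<beta>h \<gamma> - mu_c n p W X \<psi> \<beta>c\<bar>
       \<le> vsup p (grad_imb n p W X \<psi>1 \<beta>h \<gamma>) * l1norm p (\<lambda>j. \<beta>h j - \<beta>c j)
        + vsup2 p (hess_imb n p W X \<psi>2 \<beta>h \<gamma>) * (l1norm p (\<lambda>j. \<beta>h j - \<beta>c j))\<^sup>2
        + \<bar>gamma_eps n p W X Y0 \<psi> \<beta>c \<gamma>\<bar>
        + 1 * (M2 * ln (real p) * ((msup (treated n W) p X)\<^sup>2 + (msup (control n W) p X)\<^sup>2)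
                 * (l1norm p (\<lambda>j. \<beta>h j - \<beta>c j))\<^sup>2
             + M3 * sqrt (real n / ln (real p))
                 * ((msup (treated n W) p X)^3 + (msup (control n W) p X)^3) * (l1norm p (\<lambda>j. \<beta>h j - \<beta>c j))^3)"
proof -
  define \<delta> where "\<delta> = (\<lambda>j. \<beta>h j - \<beta>c j)"
  define T where "T = treated n W"
  define Cn where "Cn = control n W"
  have finT: "finite T" and finC: "finite Cn" by (auto simp: T_def Cn_def treated_def control_def)
  have Tn: "\<And>i. i \<in> T \<Longrightarrow> i < n" and Cnn: "\<And>i. i \<in> Cn \<Longrightarrow> i < n"
    and CW: "\<And>i. i \<in> Cn \<Longrightarrow> \<not> W i"
    by (auto simp: T_def Cn_def treated_def control_def)
  define c where "c = 1 / real (card T)"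
  have c0: "0 \<le> c" by (simp add: c_def)
  have cT: "c * real (card T) \<le> 1" by (simp add: c_def)
  define a where "a = (\<lambda>i. lin p (X i) \<beta>h)"
  define b where "b = (\<lambda>i. lin p (X i) \<beta>c)"
  define dd where "dd = (\<lambda>i. \<Sum>j<p. X i j * \<delta> j)"
  have ab: "\<And>i. a i - b i = dd i" by (simp add: a_def b_def dd_def \<delta>_def lin_diff)
  define K where "K = M3 * sqrt (real n / ln (real p))"
  have lnp: "0 \<le> ln (real p)" by (cases p) auto
  have K0: "0 \<le> K" using M3 lnp unfolding K_def by (intro mult_nonneg_nonneg) auto
  define R where "R = (\<lambda>i. \<psi> (a i) - \<psi> (b i) - \<psi>1 (a i) * dd i + \<psi>2 (a i) / 2 * (dd i)^2)"
  have Rb: "\<bar>R i\<bar> \<le> K / 6 * \<bar>dd i\<bar>^3" if "i < n" for i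
  proof -
    obtain t where t: "min (a i) (b i) \<le> t" "t \<le> max (a i) (b i)"
      "\<psi> (b i) = \<psi> (a i) + \<psi>1 (a i) * (b i - a i) + \<psi>2 (a i) / 2 * (b i - a i)^2 + \<psi>3 t / 6 * (b i - a i)^3"
      using taylor3[OF d1 d2 d3, of "a i" "b i"] by blast
    have "\<bar>a i\<bar> \<le> u" "\<bar>b i\<bar> \<le> u" using hc hh that by (auto simp: a_def b_def)
    hence "\<bar>t\<bar> \<le> u" using t(1,2) by auto
    hence p3: "\<bar>\<psi>3 t\<bar> \<le> K" using h3 by (simp add: K_def)
    have bd: "b i - a i = - dd i" using ab[of i] by simp
    have Req: "R i = \<psi>3 t / 6 * (dd i)^3" unfolding R_def using t(3) unfolding bd by (simp add: power2_eq_square power3_eq_cube)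
    have "\<bar>R i\<bar> = \<bar>\<psi>3 t\<bar> / 6 * \<bar>dd i\<bar>^3" unfolding Req by (simp add: abs_mult power_abs)
    also have "\<dots> \<le> K / 6 * \<bar>dd i\<bar>^3" using p3 by (intro mult_right_mono divide_right_mono) auto
    finally show ?thesis .
  qed
  define Lsum where "Lsum = c * (\<Sum>i\<in>T. \<psi>1 (a i) * dd i) - (\<Sum>i\<in>Cn. \<gamma> i * (\<psi>1 (a i) * dd i))"
  define Qsum where "Qsum = c * (\<Sum>i\<in>T. \<psi>2 (a i) * (dd i)^2) - (\<Sum>i\<in>Cn. \<gamma> i * (\<psi>2 (a i) * (dd i)^2))"
  define Rsum where "Rsum = c * (\<Sum>i\<in>T. R i) - (\<Sum>i\<in>Cn. \<gamma> i * R i)"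
  define G where "G = gamma_eps n p W X Y0 \<psi> \<beta>c \<gamma>"
  have dec1: "muhat_c n p W X Y0 Y1 \<psi> \<beta>h \<gamma> - mu_c n p W X \<psi> \<beta>c
      = c * (\<Sum>i\<in>T. \<psi> (a i) - \<psi> (b i)) - (\<Sum>i\<in>Cn. \<gamma> i * (\<psi> (a i) - \<psi> (b i))) + G"
  proof -
    have "(\<Sum>i\<in>Cn. \<gamma> i * (Yobs W Y0 Y1 i - \<psi> (a i))) = (\<Sum>i\<in>Cn. \<gamma> i * (Y0 i - \<psi> (b i)) - \<gamma> i * (\<psi> (a i) - \<psi> (b i)))"
      by (rule sum.cong) (auto simp: Yobs_def CW algebra_simps)
    thus ?thesis
      by (simp add: muhat_c_def mu_c_def G_def gamma_eps_def T_def[symmetric] Cn_def[symmetric]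
          c_def[symmetric] a_def b_def sum_subtractf algebra_simps)
  qed
  have Dexp: "\<And>i. \<psi> (a i) - \<psi> (b i) = \<psi>1 (a i) * dd i - \<psi>2 (a i) * (dd i)^2 / 2 + R i"
    by (simp add: R_def)
  have dec2: "muhat_c n p W X Y0 Y1 \<psi> \<beta>h \<gamma> - mu_c n p W X \<psi> \<beta>c = Lsum - Qsum / 2 + Rsum + G"
  proof -
    have A: "(\<Sum>i\<in>T. \<psi> (a i) - \<psi> (b i)) = (\<Sum>i\<in>T. \<psi>1 (a i) * dd i) - (\<Sum>i\<in>T. \<psi>2 (a i) * (dd i)^2) / 2 + (\<Sum>i\<in>T. R i)"
      by (simp add: Dexp sum.distrib sum_subtractf sum_divide_distrib)
    have B: "(\<Sum>i\<in>Cn. \<gamma> i * (\<psi> (a i) - \<psi> (b i))) = (\<Sum>i\<in>Cn. \<gamma> i * (\<psi>1 (a i) * dd i)) - (\<Sum>i\<in>Cn. \<gamma> i * (\<psi>2 (a i) * (dd i)^2)) / 2 + (\<Sum>i\<in>Cn. \<gamma> i * R i)"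
      by (simp add: Dexp sum.distrib sum_subtractf sum_divide_distrib ring_distribs)
    show ?thesis unfolding dec1 A B Lsum_def Qsum_def Rsum_def by (simp add: field_simps)
  qed
  have Lid: "Lsum = (\<Sum>j<p. \<delta> j * grad_imb n p W X \<psi>1 \<beta>h \<gamma> j)"
  proof -
    have e1: "\<And>j. grad_imb n p W X \<psi>1 \<beta>h \<gamma> j = c * (\<Sum>i\<in>T. X i j * \<psi>1 (a i)) - (\<Sum>i\<in>Cn. X i j * (\<psi>1 (a i) * \<gamma> i))"
      by (simp add: grad_imb_def c_def T_def Cn_def a_def mult.assoc)
    have "(\<Sum>j<p. \<delta> j * grad_imb n p W X \<psi>1 \<beta>h \<gamma> j)
       = c * (\<Sum>j<p. \<delta> j * (\<Sum>i\<in>T. X i j * \<psi>1 (a i))) - (\<Sum>j<p. \<delta> j * (\<Sum>i\<in>Cn. X i j * (\<psi>1 (a i) * \<gamma> i)))"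
      unfolding e1 by (rule lc)
    also have "\<dots> = c * (\<Sum>i\<in>T. \<psi>1 (a i) * dd i) - (\<Sum>i\<in>Cn. (\<psi>1 (a i) * \<gamma> i) * dd i)"
      by (simp only: glin dd_def)
    also have "\<dots> = Lsum" unfolding Lsum_def
      by (intro arg_cong2[where f="(-)"] refl sum.cong) (simp_all add: mult_ac)
    finally show ?thesis by simp
  qed
  have Qid: "Qsum = (\<Sum>j<p. \<Sum>k<p. \<delta> j * \<delta> k * hess_imb n p W X \<psi>2 \<beta>h \<gamma> j k)"
  proof -
    have e2: "\<And>j k. hess_imb n p W X \<psi>2 \<beta>h \<gamma> j k = c * (\<Sum>i\<in>T. X i j * X i k * \<psi>2 (a i)) - (\<Sum>i\<in>Cn. X i j * X i k * (\<psi>2 (a i) * \<gamma> i))"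
      by (simp add: hess_imb_def c_def T_def Cn_def a_def mult_ac)
    have "(\<Sum>j<p. \<Sum>k<p. \<delta> j * \<delta> k * hess_imb n p W X \<psi>2 \<beta>h \<gamma> j k)
       = c * (\<Sum>j<p. \<Sum>k<p. \<delta> j * \<delta> k * (\<Sum>i\<in>T. X i j * X i k * \<psi>2 (a i)))
         - (\<Sum>j<p. \<Sum>k<p. \<delta> j * \<delta> k * (\<Sum>i\<in>Cn. X i j * X i k * (\<psi>2 (a i) * \<gamma> i)))"
      unfolding e2 by (rule lc2)
    also have "\<dots> = c * (\<Sum>i\<in>T. \<psi>2 (a i) * (dd i)^2) - (\<Sum>i\<in>Cn. (\<psi>2 (a i) * \<gamma> i) * (dd i)^2)"
      by (simp only: glin2 dd_def)
    also have "\<dots> = Qsum" unfolding Qsum_def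
      by (intro arg_cong2[where f="(-)"] refl sum.cong) (simp_all add: mult_ac)
    finally show ?thesis by simp
  qed
  define mt where "mt = msup T p X"
  define mc where "mc = msup Cn p X"
  define l where "l = l1norm p \<delta>"
  have l0: "0 \<le> l" by (simp add: l_def l1_nn)
  have mt0: "0 \<le> mt" using finT by (simp add: mt_def msup_nn)
  have mc0: "0 \<le> mc" using finC by (simp add: mc_def msup_nn)
  have ddT: "\<bar>dd i\<bar>^3 \<le> (mt * l)^3" if "i \<in> T" for i
    using absd[OF finT that, where p=p and X=X and d=\<delta>] by (intro power_mono) (auto simp: dd_def mt_def l_def)
  have ddC: "\<bar>dd i\<bar>^3 \<le> (mc * l)^3" if "i \<in> Cn" for i
    using absd[OF finC that, where p=p and X=X and d=\<delta>] by (intro power_mono) (auto simp: dd_def mc_def l_def)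
  have RTi: "\<bar>R i\<bar> \<le> K / 6 * (mt * l)^3" if i: "i \<in> T" for i
  proof -
    have "\<bar>R i\<bar> \<le> K / 6 * \<bar>dd i\<bar>^3" by (rule Rb[OF Tn[OF i]])
    also have "\<dots> \<le> K / 6 * (mt * l)^3" by (rule mult_left_mono[OF ddT[OF i]]) (use K0 in simp)
    finally show ?thesis .
  qed
  have RCi: "\<bar>R i\<bar> \<le> K / 6 * (mc * l)^3" if i: "i \<in> Cn" for i
  proof -
    have "\<bar>R i\<bar> \<le> K / 6 * \<bar>dd i\<bar>^3" by (rule Rb[OF Cnn[OF i]])
    also have "\<dots> \<le> K / 6 * (mc * l)^3" by (rule mult_left_mono[OF ddC[OF i]]) (use K0 in simp)
    finally show ?thesis .
  qed
  have RT: "\<bar>c * (\<Sum>i\<in>T. R i)\<bar> \<le> K / 6 * (mt * l)^3"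
  proof -
    have s1: "\<bar>\<Sum>i\<in>T. R i\<bar> \<le> (\<Sum>i\<in>T. K / 6 * (mt * l)^3)"
      by (rule order_trans[OF sum_abs], rule sum_mono, rule RTi)
    have "\<bar>c * (\<Sum>i\<in>T. R i)\<bar> = c * \<bar>\<Sum>i\<in>T. R i\<bar>" using c0 by (simp add: abs_mult)
    also have "\<dots> \<le> c * (\<Sum>i\<in>T. K / 6 * (mt * l)^3)" by (rule mult_left_mono[OF s1 c0])
    also have "\<dots> = (c * real (card T)) * (K / 6 * (mt * l)^3)" by simp
    also have "\<dots> \<le> 1 * (K / 6 * (mt * l)^3)"
      using cT K0 mt0 l0 by (intro mult_right_mono) auto
    finally show ?thesis by simp
  qed
  have RC: "\<bar>\<Sum>i\<in>Cn. \<gamma> i * R i\<bar> \<le> K / 6 * (mc * l)^3"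
  proof -
    have "\<bar>\<Sum>i\<in>Cn. \<gamma> i * R i\<bar> \<le> (\<Sum>i\<in>Cn. \<gamma> i * (K / 6 * (mc * l)^3))"
    proof (rule order_trans[OF sum_abs], rule sum_mono)
      fix i assume i: "i \<in> Cn"
      have g: "0 \<le> \<gamma> i" using g0 i by (simp add: Cn_def)
      show "\<bar>\<gamma> i * R i\<bar> \<le> \<gamma> i * (K / 6 * (mc * l)^3)"
        using mult_left_mono[OF RCi[OF i] g] g by (simp add: abs_mult)
    qed
    also have "\<dots> = K / 6 * (mc * l)^3"
      unfolding sum_distrib_right[symmetric] using gs by (simp add: Cn_def)
    finally show ?thesis .
  qed
  have Rs: "\<bar>Rsum\<bar> \<le> K / 6 * (mt^3 + mc^3) * l^3"
    using RT RC unfolding Rsum_def by (simp add: power_mult_distrib algebra_simps)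
  have Lb: "\<bar>Lsum\<bar> \<le> vsup p (grad_imb n p W X \<psi>1 \<beta>h \<gamma>) * l"
    unfolding Lid l_def by (rule lin_bound)
  have Qb: "\<bar>Qsum / 2\<bar> \<le> vsup2 p (hess_imb n p W X \<psi>2 \<beta>h \<gamma>) * l^2"
    using quad_bound[where p=p and d=\<delta> and h="hess_imb n p W X \<psi>2 \<beta>h \<gamma>"] vsup2_nn[where p=p and v="hess_imb n p W X \<psi>2 \<beta>h \<gamma>"] l0
    unfolding Qid l_def by (auto simp: abs_divide)
  have M2t: "0 \<le> M2 * ln (real p) * (mt\<^sup>2 + mc\<^sup>2) * l\<^sup>2" using M2 lnp by simp
  have K3: "K / 6 * (mt^3 + mc^3) * l^3 \<le> K * (mt^3 + mc^3) * l^3"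
    using K0 mt0 mc0 l0 by (intro mult_right_mono) auto
  have "\<bar>muhat_c n p W X Y0 Y1 \<psi> \<beta>h \<gamma> - mu_c n p W X \<psi> \<beta>c\<bar> \<le> \<bar>Lsum\<bar> + \<bar>Qsum / 2\<bar> + \<bar>Rsum\<bar> + \<bar>G\<bar>"
    unfolding dec2 by linarith
  thus ?thesis using Lb Qb Rs M2t K3
    unfolding \<delta>_def[symmetric] l_def[symmetric] T_def[symmetric] Cn_def[symmetric] mt_def[symmetric] mc_def[symmetric]
      G_def[symmetric] K_def[symmetric] mult_1
    by linarith
qed

theorem theorem1:
  shows "\<exists>C>0. \<forall>(n::nat) (p::nat) (W::nat\<Rightarrow>bool) (X::nat\<Rightarrow>nat\<Rightarrow>real)
      (Y0::nat\<Rightarrow>real) (Y1::nat\<Rightarrow>real)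
      (\<psi>::real\<Rightarrow>real) \<psi>1 \<psi>2 \<psi>3 (\<beta>c::nat\<Rightarrow>real) (\<beta>h::nat\<Rightarrow>real) (\<gamma>::nat\<Rightarrow>real)
      (u::real) (M2::real) (M3::real).
    (\<forall>z. (\<psi> has_real_derivative \<psi>1 z) (at z)) \<and>
    (\<forall>z. (\<psi>1 has_real_derivative \<psi>2 z) (at z)) \<and>
    (\<forall>z. (\<psi>2 has_real_derivative \<psi>3 z) (at z)) \<and>
    continuous_on UNIV \<psi>3 \<and>
    (\<forall>i\<in>control n W. \<gamma> i \<ge> 0) \<and> (\<Sum>i\<in>control n W. \<gamma> i) = 1 \<and>
    u > 0 \<and> M2 > 0 \<and> M3 > 0 \<and>
    (\<forall>z. \<bar>z\<bar> \<le> u \<longrightarrow> \<bar>\<psi>2 z\<bar> \<le> M2 * ln (real p)) \<and>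
    (\<forall>z. \<bar>z\<bar> \<le> u \<longrightarrow> \<bar>\<psi>3 z\<bar> \<le> M3 * sqrt (real n / ln (real p))) \<and>
    (\<forall>i<n. \<bar>lin p (X i) \<beta>c\<bar> \<le> u) \<and>
    (\<forall>i<n. \<bar>lin p (X i) \<beta>h\<bar> \<le> u)
    \<longrightarrow>
    (let \<delta> = (\<lambda>j. \<beta>h j - \<beta>c j) in
     \<bar>muhat_c n p W X Y0 Y1 \<psi> \<beta>h \<gamma> - mu_c n p W X \<psi> \<beta>c\<bar>
       \<le> vsup p (grad_imb n p W X \<psi>1 \<beta>h \<gamma>) * l1norm p \<delta>
        + vsup2 p (hess_imb n p W X \<psi>2 \<beta>h \<gamma>) * (l1norm p \<delta>)\<^sup>2
        + \<bar>gamma_eps n p W X Y0 \<psi> \<beta>c \<gamma>\<bar>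
        + C * (M2 * ln (real p) * ((msup (treated n W) p X)\<^sup>2 + (msup (control n W) p X)\<^sup>2)
                 * (l1norm p \<delta>)\<^sup>2
             + M3 * sqrt (real n / ln (real p))
                 * ((msup (treated n W) p X)^3 + (msup (control n W) p X)^3) * (l1norm p \<delta>)^3))"
    apply (rule exI[of _ "1::real"])
  apply (simp only: Let_def)
  apply (intro conjI allI impI)
   apply simp
  apply (elim conjE)
  apply (rule main)
             apply assumption+
  done

end
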